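(* Let $(\omega,c)\in\mathbb{R}^2$ satisfy: $\omega>c^2/4$, or $\omega=c^2/4$ and $c>0$. Then, as $\eta_3\to\alpha_1$ with $\eta_3\in(\alpha_0,\alpha_1)$, $$k\to\begin{cases}1&\text{if }\omega>c^2/4,\\ \frac1{\sqrt2}&\text{if }\omega=c^2/4\text{ and }c>0,\end{cases}\qquad \beta^2\to\begin{cases}\dfrac{2\sqrt\omega+c}{2\sqrt\omega-c}&\text{if }\omega>c^2/4,\\ \infty&\text{if }\omega=c^2/4\text{ and }c>0.\end{cases}$$
   Context: $\alpha_0=\tfrac13(4c+\sqrt{48\omega+4c^2})$, $\alpha_1=4\sqrt\omega+2c$, $A(x)=-3x^2+8cx+64\omega$. For $\eta_3\in(\alpha_0,\alpha_1)$: $\eta_1=\frac{-\eta_3+4c-\sqrt{A(\eta_3)}}{2}<0$, $\eta_2=\frac{-\eta_3+4c+\sqrt{A(\eta_3)}}{2}\in(0,\eta_3)$, $k\in(0,1)$ with $k^2=\frac{-\eta_1(\eta_3-\eta_2)}{\eta_3(\eta_2-\eta_1)}$, and $\beta^2=-\eta_3k^2/\eta_1$. *)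

theory Defs
  imports "HOL-Analysis.Analysis"
begin

definition alpha0 :: "real \<Rightarrow> real \<Rightarrow> real" where
  "alpha0 \<omega> c = (4*c + sqrt (48*\<omega> + 4*c^2)) / 3"

definition alpha1 :: "real \<Rightarrow> real \<Rightarrow> real" where
  "alpha1 \<omega> c = 4 * sqrt \<omega> + 2*c"

definition Apoly :: "real \<Rightarrow> real \<Rightarrow> real \<Rightarrow> real" where
  "Apoly \<omega> c x = -3*x^2 + 8*c*x + 64*\<omega>"

definition eta1 :: "real \<Rightarrow> real \<Rightarrow> real \<Rightarrow> real" where
  "eta1 \<omega> c \<eta>3 = (-\<eta>3 + 4*c - sqrt (Apoly \<omega> c \<eta>3)) / 2"

definition eta2 :: "real \<Rightarrow> real \<Rightarrow> real \<Rightarrow> real" where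
  "eta2 \<omega> c \<eta>3 = (-\<eta>3 + 4*c + sqrt (Apoly \<omega> c \<eta>3)) / 2"

definition ksq :: "real \<Rightarrow> real \<Rightarrow> real \<Rightarrow> real" where
  "ksq \<omega> c \<eta>3 = (- eta1 \<omega> c \<eta>3 * (\<eta>3 - eta2 \<omega> c \<eta>3))
                    / (\<eta>3 * (eta2 \<omega> c \<eta>3 - eta1 \<omega> c \<eta>3))"

definition kmod :: "real \<Rightarrow> real \<Rightarrow> real \<Rightarrow> real" where
  "kmod \<omega> c \<eta>3 = sqrt (ksq \<omega> c \<eta>3)"

definition betasq :: "real \<Rightarrow> real \<Rightarrow> real \<Rightarrow> real" where
  "betasq \<omega> c \<eta>3 = - \<eta>3 * ksq \<omega> c \<eta>3 / eta1 \<omega> c \<eta>3"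

end

theory Submission
  imports Defs
begin

lemma ksq_fun: "ksq \<omega> c = (\<lambda>x. (- ((-x + 4*c - sqrt (-3*x^2 + 8*c*x + 64*\<omega>))/2) *
   (x - (-x + 4*c + sqrt (-3*x^2 + 8*c*x + 64*\<omega>))/2)) /
   (x * ((-x + 4*c + sqrt (-3*x^2 + 8*c*x + 64*\<omega>))/2 - (-x + 4*c - sqrt (-3*x^2 + 8*c*x + 64*\<omega>))/2)))"
  by (simp add: fun_eq_iff ksq_def eta1_def eta2_def Apoly_def)

lemma eta1_fun: "eta1 \<omega> c = (\<lambda>x. (-x + 4*c - sqrt (-3*x^2 + 8*c*x + 64*\<omega>))/2)"
  by (simp add: fun_eq_iff eta1_def Apoly_def)

lemma case1:
  fixes \<omega> c :: real
  assumes h: "\<omega> > c^2/4"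
  defines "F \<equiv> at (alpha1 \<omega> c) within {alpha0 \<omega> c<..<alpha1 \<omega> c}"
  shows "(kmod \<omega> c \<longlongrightarrow> 1) F \<and> (betasq \<omega> c \<longlongrightarrow> (2 * sqrt \<omega> + c) / (2 * sqrt \<omega> - c)) F"
proof -
  define s where "s = sqrt \<omega>"
  have w0: "\<omega> > 0" using h by (smt (verit) zero_le_power2 divide_nonneg_pos)
  have s0: "s > 0" using w0 s_def by simp
  have ss: "s^2 = \<omega>" using w0 s_def by simp
  have cs: "\<bar>c\<bar> < 2 * s"
  proof -
    have "\<bar>c\<bar>^2 < (2 * s)^2" using h ss by (simp add: power_mult_distrib)
    thus ?thesis using s0 by (smt (verit) power_mono)
  qed
  define a where "a = 4* s + 2*c"
  have a1: "alpha1 \<omega> c = a" by (simp add: alpha1_def a_def s_def)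
  have A: "-3*a^2 + 8*c*a + 64*\<omega> = (2*(2* s-c))^2"
    unfolding a_def ss[symmetric] by (simp add: power2_eq_square algebra_simps)
  have sq: "sqrt (-3*a^2 + 8*c*a + 64*\<omega>) = 2*(2* s-c)" using A cs by simp
  have apos: "a > 0" using cs a_def by linarith
  have e1: "eta1 \<omega> c a = 2*c - 4* s"
  proof -
    have "eta1 \<omega> c a = (-a + 4*c - 2*(2* s-c))/2" using sq by (simp add: eta1_def Apoly_def)
    thus ?thesis by (simp add: a_def)
  qed
  have e2: "eta2 \<omega> c a = 0"
  proof -
    have "eta2 \<omega> c a = (-a + 4*c + 2*(2* s-c))/2" using sq by (simp add: eta2_def Apoly_def)
    thus ?thesis by (simp add: a_def)
  qed
  have kc: "isCont (ksq \<omega> c) a"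
  proof -
    have Q: "\<And>q. q > 0 \<Longrightarrow> a * ((-a+4*c+q)/2 - (-a+4*c-q)/2) \<noteq> 0" using apos by simp
    have P: "sqrt (-3*a^2 + 8*c*a + 64*\<omega>) > 0" using sq cs by simp
    show ?thesis unfolding ksq_fun
      apply (intro continuous_intros)
      apply (rule Q[OF P] | simp)+
      done
  qed
  have kv: "ksq \<omega> c a = 1"
  proof -
    have n: "2*c - 4* s \<noteq> 0" using cs by linarith
    have "ksq \<omega> c a = - (2*c - 4* s) * (a - 0) / (a * (0 - (2*c - 4* s)))"
      unfolding ksq_def e1 e2 by simp
    also have "\<dots> = 1" using n apos by simp
    finally show ?thesis .
  qed
  have ec: "isCont (eta1 \<omega> c) a" unfolding eta1_fun by (intro continuous_intros; simp)
  have T1: "(ksq \<omega> c \<longlongrightarrow> 1) F" unfolding F_def a1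
    using continuous_within[THEN iffD1, OF continuous_at_imp_continuous_at_within[OF kc]]
    unfolding kv .
  have T2: "(eta1 \<omega> c \<longlongrightarrow> 2*c - 4* s) F" unfolding F_def a1
    using continuous_within[THEN iffD1, OF continuous_at_imp_continuous_at_within[OF ec]]
    unfolding e1 .
  have T3: "((\<lambda>x. x) \<longlongrightarrow> a) F" unfolding F_def a1
    by (intro tendsto_ident_at)
  have "(kmod \<omega> c \<longlongrightarrow> sqrt 1) F"
    unfolding kmod_def[abs_def] by (intro tendsto_intros T1)
  moreover have "(betasq \<omega> c \<longlongrightarrow> - a * 1 / (2*c - 4* s)) F"
    unfolding betasq_def[abs_def] using cs by (intro tendsto_intros T1 T2 T3) auto
  moreover have "- a * 1 / (2*c - 4* s) = (2 * sqrt \<omega> + c) / (2 * sqrt \<omega> - c)"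
    using cs unfolding a_def s_def[symmetric] by (simp add: field_simps)
  ultimately show ?thesis by simp
qed

lemma case2:
  fixes \<omega> c :: real
  assumes hw: "\<omega> = c^2/4" and hc: "c > 0"
  defines "F \<equiv> at (alpha1 \<omega> c) within {alpha0 \<omega> c<..<alpha1 \<omega> c}"
  shows "(kmod \<omega> c \<longlongrightarrow> 1 / sqrt 2) F \<and> filterlim (betasq \<omega> c) at_top F"
proof -
  have sw: "sqrt \<omega> = c/2"
  proof -
    have "\<omega> = (c/2)^2" using hw by (simp add: power_divide)
    thus ?thesis using hc by simp
  qed
  have a1: "alpha1 \<omega> c = 4*c" by (simp add: alpha1_def sw)
  have a0: "alpha0 \<omega> c = 8*c/3"
  proof -
    have E: "48*\<omega> + 4*c^2 = (4*c)^2" using hw by (simp add: power2_eq_square)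
    have "sqrt (48*\<omega> + 4*c^2) = sqrt ((4*c)^2)" by (simp only: E)
    also have "\<dots> = 4*c" using hc by (subst real_sqrt_abs) simp
    finally have "sqrt (48*\<omega> + 4*c^2) = 4*c" .
    thus ?thesis by (simp add: alpha0_def)
  qed
  define S where "S = {8*c/3<..<4*c}"
  have F: "F = at (4*c) within S" unfolding F_def a0 a1 S_def ..
  have evS: "eventually (\<lambda>x. x \<in> S) F" unfolding F by (simp add: eventually_at_filter)
  have Ap: "\<And>x. Apoly \<omega> c x = (3*x + 4*c) * (4*c - x)"
    using hw by (simp add: Apoly_def power2_eq_square algebra_simps)
  define g where "g = (\<lambda>x. (1 - sqrt (4*c - x) / sqrt (3*x + 4*c)) *
        (3*x - 4*c - sqrt (Apoly \<omega> c x)) / (4*x))"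
  have eqk: "ksq \<omega> c x = g x" if xS: "x \<in> S" for x
  proof -
    define u where "u = 4*c - x"
    define p where "p = 3*x + 4*c"
    have u0: "u > 0" and p0: "p > 0" and x0: "x > 0" using xS hc by (auto simp: S_def u_def p_def)
    define d where "d = sqrt p * sqrt u"
    have dA: "sqrt (Apoly \<omega> c x) = d" unfolding d_def Ap p_def u_def by (simp add: real_sqrt_mult)
    have d0: "d > 0" using u0 p0 d_def by simp
    have uu: "u = sqrt u * sqrt u" using u0 by simp
    have e1: "eta1 \<omega> c x = (u - d)/2" unfolding eta1_def dA u_def by simp
    have e2: "eta2 \<omega> c x = (u + d)/2" unfolding eta2_def dA u_def by simp
    have "ksq \<omega> c x = - ((u - d)/2) * (x - (u + d)/2) / (x * ((u + d)/2 - (u - d)/2))"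
      unfolding ksq_def e1 e2 ..
    also have "\<dots> = (d - u) * (3*x - 4*c - d) / (4 * x * d)"
      using d0 x0 by (simp add: field_simps u_def)
    also have "\<dots> = ((d - u) / d) * (3*x - 4*c - d) / (4*x)"
      using d0 x0 by (simp add: field_simps)
    also have "(d - u) / d = 1 - sqrt u / sqrt p"
      using d0 p0 u0 unfolding d_def by (subst uu) (simp add: field_simps)
    finally show ?thesis unfolding g_def dA[symmetric] u_def p_def .
  qed
  have Tx: "((\<lambda>x. x) \<longlongrightarrow> 4*c) F" unfolding F by (rule tendsto_ident_at)
  have TA: "((\<lambda>x. sqrt (Apoly \<omega> c x)) \<longlongrightarrow> 0) F"
  proof -
    have "((\<lambda>x. sqrt ((3*x + 4*c) * (4*c - x))) \<longlongrightarrow> sqrt ((3*(4*c) + 4*c) * (4*c - 4*c))) F"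
      by (intro tendsto_intros Tx)
    thus ?thesis unfolding Ap by simp
  qed
  have Tg: "(g \<longlongrightarrow> (1 - sqrt (4*c - 4*c) / sqrt (3*(4*c) + 4*c)) * (3*(4*c) - 4*c - 0) / (4*(4*c))) F"
    unfolding g_def using hc by (intro tendsto_intros Tx TA) auto
  have gv: "(1 - sqrt (4*c - 4*c) / sqrt (3*(4*c) + 4*c)) * (3*(4*c) - 4*c - 0) / (4*(4*c)) = 1/2"
    using hc by simp
  have Tk: "(ksq \<omega> c \<longlongrightarrow> 1/2) F"
  proof -
    have ev: "eventually (\<lambda>x. g x = ksq \<omega> c x) F" using evS by (rule eventually_mono) (simp add: eqk)
    have "(g \<longlongrightarrow> 1/2) F" using Tg unfolding gv .
    thus ?thesis using ev by (rule Lim_transform_eventually)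
  qed
  have K: "(kmod \<omega> c \<longlongrightarrow> 1 / sqrt 2) F"
  proof -
    have "((\<lambda>x. sqrt (ksq \<omega> c x)) \<longlongrightarrow> sqrt (1/2)) F" by (intro tendsto_intros Tk)
    thus ?thesis by (simp add: kmod_def[abs_def] real_sqrt_divide)
  qed
  define h where "h = (\<lambda>x. sqrt (Apoly \<omega> c x) - (4*c - x))"
  have Th: "(h \<longlongrightarrow> 0) F"
  proof -
    have "(h \<longlongrightarrow> 0 - (4*c - 4*c)) F" unfolding h_def by (intro tendsto_intros TA Tx)
    thus ?thesis by simp
  qed
  have hpos: "h x > 0" if xS: "x \<in> S" for x
  proof -
    define u where "u = 4*c - x"
    define p where "p = 3*x + 4*c"
    have u0: "u > 0" and p0: "p > 0" and x0: "x > 0" using xS hc by (auto simp: S_def u_def p_def)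
    have pu: "sqrt u < sqrt p" using x0 by (simp add: u_def p_def)
    have uu: "u = sqrt u * sqrt u" using u0 by simp
    have "h x = sqrt u * (sqrt p - sqrt u)"
      unfolding h_def Ap p_def[symmetric] u_def[symmetric] by (subst (2) uu) (simp add: real_sqrt_mult algebra_simps)
    also have "\<dots> > 0" using pu u0 by simp
    finally show ?thesis .
  qed
  have Hi: "filterlim (\<lambda>x. inverse (h x)) at_top F"
    by (rule filterlim_inverse_at_top[OF Th]) (rule eventually_mono[OF evS], simp add: hpos)
  have T2: "((\<lambda>x. 2 * x * ksq \<omega> c x) \<longlongrightarrow> 2 * (4*c) * (1/2)) F" by (intro tendsto_intros Tx Tk)
  have B0: "filterlim (\<lambda>x. 2 * x * ksq \<omega> c x * inverse (h x)) at_top F"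
    by (rule filterlim_tendsto_pos_mult_at_top[OF T2 _ Hi]) (use hc in simp)
  have "eventually (\<lambda>x. 2 * x * ksq \<omega> c x * inverse (h x) = betasq \<omega> c x) F"
  proof (rule eventually_mono[OF evS])
    fix x assume xS: "x \<in> S"
    have E: "eta1 \<omega> c x = - h x / 2" unfolding eta1_def h_def by simp
    show "2 * x * ksq \<omega> c x * inverse (h x) = betasq \<omega> c x"
      using hpos[OF xS] unfolding betasq_def E by (simp add: field_simps)
  qed
  hence "filterlim (\<lambda>x. betasq \<omega> c x) at_top F" by (rule iffD1[OF filterlim_cong[OF refl refl] B0])
  with K show ?thesis by simp
qed

theorem lemma3p6:
  fixes \<omega> c :: real
  assumes "\<omega> > c^2/4 \<or> (\<omega> = c^2/4 \<and> c > 0)"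
  shows "(\<omega> > c^2/4 \<longrightarrow>
            ((kmod \<omega> c \<longlongrightarrow> 1) (at (alpha1 \<omega> c) within {alpha0 \<omega> c<..<alpha1 \<omega> c}) \<and>
             (betasq \<omega> c \<longlongrightarrow> (2 * sqrt \<omega> + c) / (2 * sqrt \<omega> - c))
                (at (alpha1 \<omega> c) within {alpha0 \<omega> c<..<alpha1 \<omega> c})))
       \<and> ((\<omega> = c^2/4 \<and> c > 0) \<longrightarrow>
            ((kmod \<omega> c \<longlongrightarrow> 1 / sqrt 2) (at (alpha1 \<omega> c) within {alpha0 \<omega> c<..<alpha1 \<omega> c}) \<and>
             filterlim (betasq \<omega> c) at_top (at (alpha1 \<omega> c) within {alpha0 \<omega> c<..<alpha1 \<omega> c})))"
  using case1[of c \<omega>] case2[of \<omega> c] by blast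

end
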